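(* Let $p,q$ be distinct primes, $n\geqslant1$, and let $S$ be a minimal generating set for a $C_{p^nq}$-transfer system. Let $T$, $B$ and $D$ be the numbers of top, bottom and diagonal arrows in $S$, respectively. Then: (1) $T+B\leqslant n$, and if $T+B=n$ then $\langle S\rangle$ contains the arrow $(0,0;n,0)$; (2) $T+D\leqslant n+1$, and if $T+D=n+1$ then $\langle S\rangle$ contains the arrow $(0,0;n,1)$; (3) $B+D\leqslant n+1$, and if $B+D=n+1$ then $\langle S\rangle$ contains the arrow $(0,0;n,0)$.
   Context: For a finite group $G$, an arrow is a pair $(H,K)$ of subgroups with $H\leqslant K$; identity arrows are those with $H=K$. A $G$-transfer system is a set of arrows containing all identities and closed under composition ($(H,K),(K,L)\Rightarrow(H,L)$), conjugation ($(H,K)\Rightarrow(gHg^{-1},gKg^{-1})$) and restriction ($(H,K)$ and $L\leqslant K\Rightarrow(H\cap L,L)$). For a set $S$ of non-identity arrows, $\langle S\rangle$ is the smallest transfer system containing $S$; $S$ is a minimal generating set of $\mathsf{T}$ if $\langle S\rangle=\mathsf{T}$ and $\langle S\setminus\{s\}\rangle\neq\mathsf{T}$ for all $s\in S$. In $C_{p^nq}$, $C_{p^aq^x}$ ($0\leqslant a\leqslant n$, $x\in\{0,1\}$) denotes the unique subgroup of order $p^aq^x$, and $(a,x;b,y)$ denotes the arrow $(C_{p^aq^x},C_{p^bq^y})$ (requiring $a\leqslant b$, $x\leqslant y$). Top arrows are those of the form $(i,1;j,1)$ with $i<j$; diagonal arrows are those of the form $(i,0;j,1)$ with $i\leqslant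 j$; bottom arrows are those of the form $(i,0;j,0)$ with $i<j$. *)

theory Defs
  imports Main "HOL-Computational_Algebra.Primes"
begin

text \<open>Subgroups of the cyclic group C_{p^n q} (p, q distinct primes) are in
bijection with pairs (a, x), 0 \<le> a \<le> n, x \<in> {0,1}, the pair (a,x) standing for the
unique subgroup C_{p^a q^x} of order p^a q^x.\<close>

type_synonym sgrp = "nat \<times> nat"
type_synonym arrow = "sgrp \<times> sgrp"

definition valid_sg :: "nat \<Rightarrow> sgrp \<Rightarrow> bool" where
  "valid_sg n H \<longleftrightarrow> fst H \<le> n \<and> snd H \<le> 1"

definition sg_le :: "sgrp \<Rightarrow> sgrp \<Rightarrow> bool" where
  "sg_le H K \<longleftrightarrow> fst H \<le> fst K \<and> snd H \<le> snd K"

definition sg_inter :: "sgrp \<Rightarrow> sgrp \<Rightarrow> sgrp" where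
  "sg_inter H K = (min (fst H) (fst K), min (snd H) (snd K))"

definition is_arrow :: "nat \<Rightarrow> arrow \<Rightarrow> bool" where
  "is_arrow n A \<longleftrightarrow> valid_sg n (fst A) \<and> valid_sg n (snd A) \<and> sg_le (fst A) (snd A)"

definition transfer_system :: "nat \<Rightarrow> arrow set \<Rightarrow> bool" where
  "transfer_system n T \<longleftrightarrow>
     (\<forall>A\<in>T. is_arrow n A) \<and>
     (\<forall>H. valid_sg n H \<longrightarrow> (H, H) \<in> T) \<and>
     (\<forall>H K L. (H, K) \<in> T \<longrightarrow> (K, L) \<in> T \<longrightarrow> (H, L) \<in> T) \<and>
     (\<forall>H K L. (H, K) \<in> T \<longrightarrow> valid_sg n L \<longrightarrow> sg_le L K \<longrightarrow> (sg_inter H L, L) \<in> T)"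

text \<open>Conjugation closure is automatic since the group is abelian.\<close>

definition generated :: "nat \<Rightarrow> arrow set \<Rightarrow> arrow set" where
  "generated n S = \<Inter>{T. transfer_system n T \<and> S \<subseteq> T}"

definition minimal_generating_set :: "nat \<Rightarrow> arrow set \<Rightarrow> arrow set \<Rightarrow> bool" where
  "minimal_generating_set n S T \<longleftrightarrow>
     (\<forall>A\<in>S. is_arrow n A \<and> fst A \<noteq> snd A) \<and>
     generated n S = T \<and>
     (\<forall>s\<in>S. generated n (S - {s}) \<noteq> T)"

definition top_arrow :: "arrow \<Rightarrow> bool" where
  "top_arrow A \<longleftrightarrow> (\<exists>i j. A = ((i, 1), (j, 1)) \<and> i < j)"

definition diagonal_arrow :: "arrow \<Rightarrow> bool" where
  "diagonal_arrow A \<longleftrightarrow> (\<exists>i j. A = ((i, 0), (j, 1)) \<and> i \<le> j)"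

definition bottom_arrow :: "arrow \<Rightarrow> bool" where
  "bottom_arrow A \<longleftrightarrow> (\<exists>i j. A = ((i, 0), (j, 0)) \<and> i < j)"

end

theory Submission
  imports Defs
begin

lemma gen_sub: "A \<in> X \<Longrightarrow> A \<in> generated n X"
  by (auto simp: generated_def)

lemma gen_mono: "X \<subseteq> Y \<Longrightarrow> generated n X \<subseteq> generated n Y"
  by (auto simp: generated_def)

lemma gen_least: "X \<subseteq> generated n Y \<Longrightarrow> generated n X \<subseteq> generated n Y"
  unfolding generated_def by blast

lemma gen_id: "valid_sg n H \<Longrightarrow> (H,H) \<in> generated n X"
  unfolding generated_def transfer_system_def by blast

lemma gen_comp: "(H,K) \<in> generated n X \<Longrightarrow> (K,L) \<in> generated n X \<Longrightarrow> (H,L) \<in> generated n X"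
  unfolding generated_def transfer_system_def by blast

lemma gen_res: "(H,K) \<in> generated n X \<Longrightarrow> valid_sg n L \<Longrightarrow> sg_le L K \<Longrightarrow> (sg_inter H L, L) \<in> generated n X"
  unfolding generated_def transfer_system_def by blast

lemma all_ts: "transfer_system n {A. is_arrow n A}"
  unfolding transfer_system_def is_arrow_def valid_sg_def sg_le_def sg_inter_def by auto

lemma gen_arrow:
  assumes "\<And>B. B \<in> X \<Longrightarrow> is_arrow n B" and "A \<in> generated n X"
  shows "is_arrow n A"
proof -
  have "{A. is_arrow n A} \<in> {T. transfer_system n T \<and> X \<subseteq> T}" using all_ts[of n] assms(1) by auto
  then show ?thesis using assms(2) unfolding generated_def by blast
qed

lemma gres: "((a,x),(b,y)) \<in> generated n X \<Longrightarrow> c \<le> b \<Longrightarrow> z \<le> y \<Longrightarrow> c \<le> n \<Longrightarrow> z \<le> (1::nat)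
   \<Longrightarrow> ((min a c, min x z),(c,z)) \<in> generated n X"
  using gen_res[of "(a,x)" "(b,y)" n X "(c,z)"] by (simp add: valid_sg_def sg_le_def sg_inter_def)

definition rch :: "nat \<Rightarrow> arrow set \<Rightarrow> nat \<Rightarrow> nat \<Rightarrow> nat \<Rightarrow> nat" where
  "rch n X i x y = Max {c. c \<le> n \<and> ((i,x),(c,y)) \<in> X}"

lemma rch_props:
  assumes "c \<le> n" "((i,x),(c,y)) \<in> X"
  shows "rch n X i x y \<le> n" "((i,x),(rch n X i x y, y)) \<in> X" "c \<le> rch n X i x y"
proof -
  have fin: "finite {c. c \<le> n \<and> ((i,x),(c,y)) \<in> X}" by (rule finite_subset[of _ "{..n}"]) auto
  have ne: "c \<in> {c. c \<le> n \<and> ((i,x),(c,y)) \<in> X}" using assms by auto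
  have "rch n X i x y \<in> {c. c \<le> n \<and> ((i,x),(c,y)) \<in> X}"
    unfolding rch_def using Max_in[OF fin] ne by blast
  then show "rch n X i x y \<le> n" "((i,x),(rch n X i x y, y)) \<in> X" by auto
  show "c \<le> rch n X i x y" unfolding rch_def using Max_ge[OF fin ne] .
qed

lemma cover0:
  assumes "\<And>c. c < n \<Longrightarrow> \<exists>a b. a \<le> c \<and> c < b \<and> b \<le> n \<and> ((a,0),(b,0)) \<in> generated n X"
  shows "((0,0),(n,0)) \<in> generated n X"
proof -
  have "m \<le> n \<Longrightarrow> ((0,0),(m,0)) \<in> generated n X" for m
  proof (induction m)
    case 0 then show ?case by (intro gen_id) (simp add: valid_sg_def)
  next
    case (Suc m)
    then have m: "m < n" "((0,0),(m,0)) \<in> generated n X" by auto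
    obtain a b where ab: "a \<le> m" "m < b" "b \<le> n" "((a,0),(b,0)) \<in> generated n X"
      using assms[OF m(1)] by blast
    have "((min 0 a, min 0 0),(a,0)) \<in> generated n X" using gres[OF m(2), of a 0] ab m by simp
    then have "((0,0),(a,0)) \<in> generated n X" by simp
    then have "((0,0),(b,0)) \<in> generated n X" using ab(4) gen_comp by blast
    from gres[OF this, of "Suc m" 0] ab show ?case by simp
  qed
  then show ?thesis by simp
qed

lemma cover1:
  assumes "((0,0),(0,1)) \<in> generated n X"
    and "\<And>m. m < n \<Longrightarrow> \<exists>a x b. a \<le> m \<and> m < b \<and> b \<le> n \<and> x \<le> 1 \<and> ((a,x),(b,1)) \<in> generated n X"
  shows "((0,0),(n,1)) \<in> generated n X"
proof -
  have "m \<le> n \<Longrightarrow> ((0,0),(m,1)) \<in> generated n X" for m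
  proof (induction m)
    case 0 then show ?case using assms(1) by simp
  next
    case (Suc m)
    then have m: "m < n" "((0,0),(m,1)) \<in> generated n X" by auto
    obtain a x b where ab: "a \<le> m" "m < b" "b \<le> n" "x \<le> 1" "((a,x),(b,1)) \<in> generated n X"
      using assms(2)[OF m(1)] by blast
    have "((min 0 a, min 0 x),(a,x)) \<in> generated n X" using gres[OF m(2), of a x] ab m by simp
    then have "((0,0),(a,x)) \<in> generated n X" by simp
    then have "((0,0),(b,1)) \<in> generated n X" using ab(5) gen_comp by blast
    from gres[OF this, of "Suc m" 1] ab show ?case by simp
  qed
  then show ?thesis by simp
qed

lemma count_inj:
  assumes "finite X" "finite Y" "X \<inter> Y = {}" "inj_on f (X \<union> Y)" "f ` (X \<union> Y) \<subseteq> {..<m}"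
  shows "card X + card Y \<le> m" and "card X + card Y = m \<Longrightarrow> f ` (X \<union> Y) = {..<m}"
proof -
  have c: "card X + card Y = card (f ` (X \<union> Y))"
    using card_Un_disjoint[OF assms(1-3)] card_image[OF assms(4)] by simp
  show "card X + card Y \<le> m" using c card_mono[OF _ assms(5)] by simp
  show "f ` (X \<union> Y) = {..<m}" if "card X + card Y = m"
    using card_subset_eq[OF _ assms(5)] c that by simp
qed

locale mgs =
  fixes n :: nat and S :: "arrow set"
  assumes arr: "\<And>A. A \<in> S \<Longrightarrow> is_arrow n A \<and> fst A \<noteq> snd A"
    and indep: "\<And>s. s \<in> S \<Longrightarrow> s \<notin> generated n (S - {s})"
begin

abbreviation GG :: "arrow \<Rightarrow> arrow set" where
  "GG A \<equiv> generated n (S - {A})"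

lemma Garr: "A \<in> GG B \<Longrightarrow> is_arrow n A"
  by (rule gen_arrow[of "S - {B}"]) (auto dest: arr)

lemma inG: "A \<in> S \<Longrightarrow> A \<noteq> B \<Longrightarrow> A \<in> GG B"
  by (auto intro: gen_sub)

lemma GG_sub: "GG B \<subseteq> generated n S"
  by (rule gen_mono) auto

lemma arrS: "((a,x),(b,y)) \<in> S \<Longrightarrow> a \<le> b \<and> x \<le> y \<and> b \<le> n \<and> y \<le> 1 \<and> (a,x) \<noteq> (b,y)"
  using arr by (fastforce simp: is_arrow_def valid_sg_def sg_le_def)

lemma finS: "finite S"
proof -
  have "S \<subseteq> ({..n} \<times> {..1::nat}) \<times> ({..n} \<times> {..1::nat})"
    using arr by (force simp: is_arrow_def valid_sg_def)
  then show ?thesis by (rule finite_subset) auto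
qed

lemma src_unique:
  assumes "((i,x),(j,y)) \<in> S" "((i,x),(j',y)) \<in> S" shows "j = j'"
proof (rule ccontr)
  assume ne: "j \<noteq> j'"
  have key: False if A: "((i,x),(j1,y)) \<in> S" and B: "((i,x),(j2,y)) \<in> S" and lt: "j1 < j2" for j1 j2
  proof -
    have "((i,x),(j2,y)) \<in> GG ((i,x),(j1,y))" using B lt by (intro inG) auto
    from gres[OF this, of j1 y] have "((min i j1, min x y),(j1,y)) \<in> GG ((i,x),(j1,y))"
      using lt arrS[OF A] by simp
    moreover have "min i j1 = i" "min x y = x" using arrS[OF A] by auto
    ultimately show False using indep[OF A] by simp
  qed
  show False
  proof (cases "j < j'")
    case True then show False using key assms by blast
  next
    case False then have "j' < j" using ne by simp
    then show False using key assms by blast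
  qed
qed

lemma bot_facts:
  assumes v: "((a,0),(k,0)) \<in> S"
  shows "a < k" "k \<le> n" "a \<le> rch n (GG ((a,0),(k,0))) a 0 0" "rch n (GG ((a,0),(k,0))) a 0 0 < k"
    "((a,0),(rch n (GG ((a,0),(k,0))) a 0 0,0)) \<in> GG ((a,0),(k,0))"
    "\<And>c. c \<le> n \<Longrightarrow> ((a,0),(c,0)) \<in> GG ((a,0),(k,0)) \<Longrightarrow> c \<le> rch n (GG ((a,0),(k,0))) a 0 0"
proof -
  let ?v = "((a,0),(k,0))"
  let ?r = "rch n (GG ?v) a 0 0"
  have ak: "a < k" "k \<le> n" using arrS[OF v] by auto
  show "a < k" "k \<le> n" by fact+
  have id: "((a,0),(a,0)) \<in> GG ?v" by (rule gen_id) (use ak in \<open>simp add: valid_sg_def\<close>)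
  have an: "a \<le> n" using ak by simp
  show mem: "((a,0),(?r,0)) \<in> GG ?v" using rch_props(2)[OF an id] .
  show "a \<le> ?r" using rch_props(3)[OF an id] .
  show "\<And>c. c \<le> n \<Longrightarrow> ((a,0),(c,0)) \<in> GG ?v \<Longrightarrow> c \<le> ?r" by (rule rch_props(3))
  show "?r < k"
  proof (rule ccontr)
    assume "\<not> ?r < k"
    then have "k \<le> ?r" by simp
    from gres[OF mem, of k 0] this ak have "((min a k, min 0 0),(k,0)) \<in> GG ?v" by simp
    then have "?v \<in> GG ?v" using ak by (simp add: min_absorb1)
    then show False using indep[OF v] by simp
  qed
qed

lemma diag_facts:
  assumes d: "((i,0),(j,1)) \<in> S" and c: "c \<le> n" "((i,0),(c,1)) \<in> GG ((i,0),(j,1))"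
  shows "rch n (GG ((i,0),(j,1))) i 0 1 < j" "((i,0),(rch n (GG ((i,0),(j,1))) i 0 1,1)) \<in> GG ((i,0),(j,1))"
    "i \<le> rch n (GG ((i,0),(j,1))) i 0 1"
    "\<And>c'. c' \<le> n \<Longrightarrow> ((i,0),(c',1)) \<in> GG ((i,0),(j,1)) \<Longrightarrow> c' \<le> rch n (GG ((i,0),(j,1))) i 0 1"
proof -
  let ?d = "((i,0),(j,1))"
  let ?r = "rch n (GG ?d) i 0 1"
  have ij: "i \<le> j" "j \<le> n" using arrS[OF d] by auto
  show mem: "((i,0),(?r,1)) \<in> GG ?d" using rch_props(2)[OF c] .
  show "\<And>c'. c' \<le> n \<Longrightarrow> ((i,0),(c',1)) \<in> GG ?d \<Longrightarrow> c' \<le> ?r" by (rule rch_props(3))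
  show "i \<le> ?r" using Garr[OF mem] by (simp add: is_arrow_def sg_le_def)
  show "?r < j"
  proof (rule ccontr)
    assume "\<not> ?r < j"
    then have "j \<le> ?r" by simp
    from gres[OF mem, of j 1] this ij have "((min i j, min 0 1),(j,1)) \<in> GG ?d" by simp
    then have "?d \<in> GG ?d" using ij by (simp add: min_absorb1)
    then show False using indep[OF d] by simp
  qed
qed

lemma tb:
  assumes u: "((i,1),(j,1)) \<in> S" and v: "((a,0),(k,0)) \<in> S"
  shows "rch n (GG ((a,0),(k,0))) a 0 0 \<noteq> i"
proof
  let ?v = "((a,0),(k,0))"
  assume eq: "rch n (GG ?v) a 0 0 = i"
  note bf = bot_facts[OF v]
  have ij: "i < j" "j \<le> n" using arrS[OF u] by auto
  have "((i,1),(j,1)) \<in> GG ?v" using u by (intro inG) auto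
  from gres[OF this, of j 0] ij have "((i,0),(j,0)) \<in> GG ?v" by simp
  moreover have "((a,0),(i,0)) \<in> GG ?v" using bf(5) eq by simp
  ultimately have "((a,0),(j,0)) \<in> GG ?v" using gen_comp by blast
  from bf(6)[OF ij(2) this] eq ij show False by simp
qed

lemma bb:
  assumes v: "((a,0),(k,0)) \<in> S" and v': "((a',0),(k',0)) \<in> S" and le: "a \<le> a'"
    and ne: "((a,0),(k,0)) \<noteq> ((a',0),(k',0))"
  shows "rch n (GG ((a,0),(k,0))) a 0 0 \<noteq> rch n (GG ((a',0),(k',0))) a' 0 0"
proof
  let ?v = "((a,0),(k,0))" and ?v' = "((a',0),(k',0))"
  let ?c = "rch n (GG ?v) a 0 0"
  assume eq: "?c = rch n (GG ?v') a' 0 0"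
  note bf = bot_facts[OF v] and bf' = bot_facts[OF v']
  have h: "a' \<le> ?c" "?c < k'" using bf'(3,4) eq by simp_all
  from gres[OF bf(5), of a' 0] h le bf'(2) have "((a,0),(a',0)) \<in> GG ?v" by (simp add: min_absorb1)
  moreover have "?v' \<in> GG ?v" using v' ne by (intro inG) auto
  ultimately have "((a,0),(k',0)) \<in> GG ?v" using gen_comp by blast
  from bf(6)[OF bf'(2) this] h show False by simp
qed

lemma td:
  assumes u: "((i,1),(j,1)) \<in> S" and d: "((a,0),(b,1)) \<in> S"
    and c: "c \<le> n" "((a,0),(c,1)) \<in> GG ((a,0),(b,1))"
  shows "rch n (GG ((a,0),(b,1))) a 0 1 \<noteq> i"
proof
  let ?d = "((a,0),(b,1))"
  assume eq: "rch n (GG ?d) a 0 1 = i"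
  note df = diag_facts[OF d c]
  have ij: "i < j" "j \<le> n" using arrS[OF u] by auto
  have "((i,1),(j,1)) \<in> GG ?d" using u by (intro inG) auto
  moreover have "((a,0),(i,1)) \<in> GG ?d" using df(2) eq by simp
  ultimately have "((a,0),(j,1)) \<in> GG ?d" using gen_comp by blast
  from df(4)[OF ij(2) this] eq ij show False by simp
qed

lemma dd_ne:
  assumes d: "((i,0),(j,1)) \<in> S" and d': "((i',0),(j',1)) \<in> S" and le: "i \<le> i'"
    and ne: "((i,0),(j,1)) \<noteq> ((i',0),(j',1))"
  shows "\<exists>c\<le>n. ((i,0),(c,1)) \<in> GG ((i,0),(j,1))"
proof -
  have h: "i' \<le> j'" "j' \<le> n" using arrS[OF d'] by auto
  have "((i',0),(j',1)) \<in> GG ((i,0),(j,1))" using d' ne by (intro inG) auto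
  from gres[OF this, of i 1] h le have "((i,0),(i,1)) \<in> GG ((i,0),(j,1))" by (simp add: min_absorb2)
  moreover have "i \<le> n" using h le by simp
  ultimately show ?thesis by blast
qed

lemma dd:
  assumes d: "((i,0),(j,1)) \<in> S" and d': "((i',0),(j',1)) \<in> S" and le: "i \<le> i'"
    and ne: "((i,0),(j,1)) \<noteq> ((i',0),(j',1))"
    and c: "c \<le> n" "((i,0),(c,1)) \<in> GG ((i,0),(j,1))"
    and c': "c' \<le> n" "((i',0),(c',1)) \<in> GG ((i',0),(j',1))"
  shows "rch n (GG ((i,0),(j,1))) i 0 1 \<noteq> rch n (GG ((i',0),(j',1))) i' 0 1"
proof
  let ?d = "((i,0),(j,1))" and ?d' = "((i',0),(j',1))"
  let ?r = "rch n (GG ?d) i 0 1"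
  assume eq: "?r = rch n (GG ?d') i' 0 1"
  note df = diag_facts[OF d c] and df' = diag_facts[OF d' c']
  have h: "i' \<le> ?r" "?r < j'" "j' \<le> n" using df'(1,3) eq arrS[OF d'] by simp_all
  from gres[OF df(2), of i' 0] h le have "((i,0),(i',0)) \<in> GG ?d" by (simp add: min_absorb1)
  moreover have "?d' \<in> GG ?d" using d' ne by (intro inG) auto
  ultimately have "((i,0),(j',1)) \<in> GG ?d" using gen_comp by blast
  from df(4)[OF h(3) this] h show False by simp
qed

lemma nonmax:
  assumes d: "((i,0),(j,1)) \<in> S" and d': "((i',0),(j',1)) \<in> S" and lt: "i < i'"
  shows "i < j"
proof (rule ccontr)
  assume "\<not> i < j"
  then have ij: "j = i" using arrS[OF d] by simp
  have h: "i' \<le> j'" "j' \<le> n" using arrS[OF d'] by auto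
  have "((i',0),(j',1)) \<in> GG ((i,0),(j,1))" using d' lt by (intro inG) auto
  from gres[OF this, of i 1] h lt have "((i,0),(i,1)) \<in> GG ((i,0),(j,1))" by (simp add: min_absorb2)
  then show False using indep[OF d] ij by simp
qed

lemma bd:
  assumes v: "((a,0),(k,0)) \<in> S" and d: "((i,0),(j,1)) \<in> S" and lt: "i < j"
  shows "rch n (GG ((a,0),(k,0))) a 0 0 \<noteq> i"
proof
  let ?v = "((a,0),(k,0))"
  assume eq: "rch n (GG ?v) a 0 0 = i"
  note bf = bot_facts[OF v]
  have jn: "j \<le> n" using arrS[OF d] by auto
  have "((i,0),(j,1)) \<in> GG ?v" using d by (intro inG) auto
  from gres[OF this, of j 0] lt jn have "((i,0),(j,0)) \<in> GG ?v" by simp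
  moreover have "((a,0),(i,0)) \<in> GG ?v" using bf(5) eq by simp
  ultimately have "((a,0),(j,0)) \<in> GG ?v" using gen_comp by blast
  from bf(6)[OF jn this] eq lt show False by simp
qed

lemma part1:
  "card {A\<in>S. top_arrow A} + card {A\<in>S. bottom_arrow A} \<le> n \<and>
   (card {A\<in>S. top_arrow A} + card {A\<in>S. bottom_arrow A} = n \<longrightarrow> ((0,0),(n,0)) \<in> generated n S)"
proof -
  define X where "X = {A\<in>S. top_arrow A}"
  define Y where "Y = {A\<in>S. bottom_arrow A}"
  define f where "f A = (if snd (fst A) = 1 then fst (fst A) else rch n (GG A) (fst (fst A)) 0 0)" for A
  have Xf: "A \<in> X \<Longrightarrow> \<exists>i j. A = ((i,1),(j,1)) \<and> A \<in> S" for A unfolding X_def top_arrow_def by auto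
  have Yf: "A \<in> Y \<Longrightarrow> \<exists>a k. A = ((a,0),(k,0)) \<and> A \<in> S" for A unfolding Y_def bottom_arrow_def by auto
  have finX: "finite X" unfolding X_def using finS by auto
  have finY: "finite Y" unfolding Y_def using finS by auto
  have disj: "X \<inter> Y = {}" unfolding X_def Y_def top_arrow_def bottom_arrow_def by auto
  have fX: "f ((i,1),(j,1)) = i" for i j by (simp add: f_def)
  have fY: "f ((a,0),(k,0)) = rch n (GG ((a,0),(k,0))) a 0 0" for a k by (simp add: f_def)
  have inj: "inj_on f (X \<union> Y)"
  proof (rule inj_onI, rule ccontr)
    fix A B assume A: "A \<in> X \<union> Y" and B: "B \<in> X \<union> Y" and eq: "f A = f B" and ne: "A \<noteq> B"
    show False
    proof (cases "A \<in> X")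
      case True
      then obtain i j where a: "A = ((i,1),(j,1))" "A \<in> S" using Xf by blast
      show False
      proof (cases "B \<in> X")
        case True
        then obtain i' j' where b: "B = ((i',1),(j',1))" "B \<in> S" using Xf by blast
        have "i = i'" using eq a b fX by simp
        then show False using src_unique[of i 1 j 1 j'] a b ne by auto
      next
        case False
        then obtain a' k' where b: "B = ((a',0),(k',0))" "B \<in> S" using Yf B by blast
        show False using tb[of i j a' k'] a b eq fX fY by auto
      qed
    next
      case False
      then obtain a k where a: "A = ((a,0),(k,0))" "A \<in> S" using Yf A by blast
      show False
      proof (cases "B \<in> X")
        case True
        then obtain i' j' where b: "B = ((i',1),(j',1))" "B \<in> S" using Xf by blast
        show False using tb[of i' j' a k] a b eq fX fY by auto
      next
        case False
        then obtain a' k' where b: "B = ((a',0),(k',0))" "B \<in> S" using Yf B by blast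
        show False
        proof (cases "a \<le> a'")
          case True then show False using bb[of a k a' k'] a b eq ne fY by auto
        next
          case False then show False using bb[of a' k' a k] a b eq ne fY by auto
        qed
      qed
    qed
  qed
  have rng: "f ` (X \<union> Y) \<subseteq> {..<n}"
  proof
    fix y assume "y \<in> f ` (X \<union> Y)"
    then obtain A where A: "A \<in> X \<union> Y" "y = f A" by blast
    show "y \<in> {..<n}"
    proof (cases "A \<in> X")
      case True
      then obtain i j where a: "A = ((i,1),(j,1))" "A \<in> S" using Xf by blast
      then show ?thesis using arrS[of i 1 j 1] A fX by auto
    next
      case False
      then obtain a k where a: "A = ((a,0),(k,0))" "A \<in> S" using Yf A by blast
      then show ?thesis using bot_facts(2,4)[of a k] A fY by auto
    qed
  qed
  note cnt = count_inj[OF finX finY disj inj rng]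
  have "((0,0),(n,0)) \<in> generated n S" if eqn: "card X + card Y = n"
  proof (rule cover0)
    fix c assume c: "c < n"
    then have "c \<in> f ` (X \<union> Y)" using cnt(2)[OF eqn] by auto
    then obtain A where A: "A \<in> X \<union> Y" "f A = c" by (metis imageE)
    show "\<exists>a b. a \<le> c \<and> c < b \<and> b \<le> n \<and> ((a,0),(b,0)) \<in> generated n S"
    proof (cases "A \<in> X")
      case True
      then obtain i j where a: "A = ((i,1),(j,1))" "A \<in> S" using Xf by blast
      have ij: "i < j" "j \<le> n" using arrS[of i 1 j 1] a by auto
      have "((i,1),(j,1)) \<in> generated n S" using a gen_sub by metis
      from gres[OF this, of j 0] ij have "((i,0),(j,0)) \<in> generated n S" by simp
      then show ?thesis using ij a A fX by auto
    next
      case False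
      then obtain a k where a: "A = ((a,0),(k,0))" "A \<in> S" using Yf A by blast
      have "((a,0),(k,0)) \<in> generated n S" using a gen_sub by metis
      then show ?thesis using bot_facts(2,3,4)[of a k] a A fY by (intro exI[of _ a] exI[of _ k]) auto
    qed
  qed
  then show ?thesis using cnt(1) unfolding X_def Y_def by blast
qed

lemma part2:
  "card {A\<in>S. top_arrow A} + card {A\<in>S. diagonal_arrow A} \<le> n + 1 \<and>
   (card {A\<in>S. top_arrow A} + card {A\<in>S. diagonal_arrow A} = n + 1 \<longrightarrow> ((0,0),(n,1)) \<in> generated n S)"
proof -
  define X where "X = {A\<in>S. top_arrow A}"
  define Y where "Y = {A\<in>S. diagonal_arrow A}"
  define f where "f A = (if snd (fst A) = 1 then Suc (fst (fst A)) else
     if (\<exists>c\<le>n. ((fst (fst A),0),(c,1)) \<in> GG A) then Suc (rch n (GG A) (fst (fst A)) 0 1) else 0)" for A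
  have Xf: "A \<in> X \<Longrightarrow> \<exists>i j. A = ((i,1),(j,1)) \<and> A \<in> S" for A unfolding X_def top_arrow_def by auto
  have Yf: "A \<in> Y \<Longrightarrow> \<exists>a k. A = ((a,0),(k,1)) \<and> A \<in> S" for A unfolding Y_def diagonal_arrow_def by auto
  have finX: "finite X" unfolding X_def using finS by auto
  have finY: "finite Y" unfolding Y_def using finS by auto
  have disj: "X \<inter> Y = {}" unfolding X_def Y_def top_arrow_def diagonal_arrow_def by auto
  have fX: "f ((i,1),(j,1)) = Suc i" for i j by (simp add: f_def)
  have fY: "f ((a,0),(k,1)) = (if (\<exists>c\<le>n. ((a,0),(c,1)) \<in> GG ((a,0),(k,1)))
       then Suc (rch n (GG ((a,0),(k,1))) a 0 1) else 0)" for a k by (simp add: f_def)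
  have inj: "inj_on f (X \<union> Y)"
  proof (rule inj_onI, rule ccontr)
    fix A B assume A: "A \<in> X \<union> Y" and B: "B \<in> X \<union> Y" and eq: "f A = f B" and ne: "A \<noteq> B"
    have TD: False if a: "A' = ((i,1),(j,1))" "A' \<in> S" and b: "B' = ((a',0),(k',1))" "B' \<in> S"
      and e: "f A' = f B'" for A' B' i j a' k'
    proof -
      have "f B' \<noteq> 0" using e a fX by simp
      then obtain c where c: "c \<le> n" "((a',0),(c,1)) \<in> GG ((a',0),(k',1))" using fY b by (auto split: if_splits)
      then have "f B' = Suc (rch n (GG ((a',0),(k',1))) a' 0 1)" using fY b by auto
      then show False using td[of i j a' k' c] a b e fX c by auto
    qed
    have DD: False if a: "A' = ((a,0),(k,1))" "A' \<in> S" and b: "B' = ((a',0),(k',1))" "B' \<in> S"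
      and e: "f A' = f B'" and le: "a \<le> a'" and ne': "A' \<noteq> B'" for A' B' a k a' k'
    proof -
      obtain c where c: "c \<le> n" "((a,0),(c,1)) \<in> GG ((a,0),(k,1))" using dd_ne[of a k a' k'] a b le ne' by auto
      then have fa: "f A' = Suc (rch n (GG ((a,0),(k,1))) a 0 1)" using fY a by auto
      then have "f B' \<noteq> 0" using e by simp
      then obtain c' where c': "c' \<le> n" "((a',0),(c',1)) \<in> GG ((a',0),(k',1))" using fY b by (auto split: if_splits)
      then have "f B' = Suc (rch n (GG ((a',0),(k',1))) a' 0 1)" using fY b by auto
      then show False using dd[of a k a' k' c c'] a b e fa c c' le ne' by auto
    qed
    show False
    proof (cases "A \<in> X")
      case True
      then obtain i j where a: "A = ((i,1),(j,1))" "A \<in> S" using Xf by blast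
      show False
      proof (cases "B \<in> X")
        case True
        then obtain i' j' where b: "B = ((i',1),(j',1))" "B \<in> S" using Xf by blast
        have "i = i'" using eq a b fX by simp
        then show False using src_unique[of i 1 j 1 j'] a b ne by auto
      next
        case False
        then obtain a' k' where b: "B = ((a',0),(k',1))" "B \<in> S" using Yf B by blast
        show False using TD[OF a b eq] .
      qed
    next
      case False
      then obtain a k where a: "A = ((a,0),(k,1))" "A \<in> S" using Yf A by blast
      show False
      proof (cases "B \<in> X")
        case True
        then obtain i' j' where b: "B = ((i',1),(j',1))" "B \<in> S" using Xf by blast
        show False using TD[OF b a eq[symmetric]] .
      next
        case False
        then obtain a' k' where b: "B = ((a',0),(k',1))" "B \<in> S" using Yf B by blast
        show False
        proof (cases "a \<le> a'")
          case True show False by (rule DD[OF a b eq True ne])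
        next
          case False then show False using DD[OF b a eq[symmetric] _ ne[symmetric]] by simp
        qed
      qed
    qed
  qed
  have rng: "f ` (X \<union> Y) \<subseteq> {..<n+1}"
  proof
    fix y assume "y \<in> f ` (X \<union> Y)"
    then obtain A where A: "A \<in> X \<union> Y" "y = f A" by blast
    show "y \<in> {..<n+1}"
    proof (cases "A \<in> X")
      case True
      then obtain i j where a: "A = ((i,1),(j,1))" "A \<in> S" using Xf by blast
      then show ?thesis using arrS[of i 1 j 1] A fX by auto
    next
      case False
      then obtain a k where a: "A = ((a,0),(k,1))" "A \<in> S" using Yf A by blast
      show ?thesis
      proof (cases "\<exists>c\<le>n. ((a,0),(c,1)) \<in> GG ((a,0),(k,1))")
        case True
        then obtain c where c: "c \<le> n" "((a,0),(c,1)) \<in> GG ((a,0),(k,1))" by blast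
        then show ?thesis using diag_facts(1)[of a k c] a A fY arrS[of a 0 k 1] by auto
      next
        case False then show ?thesis using A a fY by auto
      qed
    qed
  qed
  note cnt = count_inj[OF finX finY disj inj rng]
  have "((0,0),(n,1)) \<in> generated n S" if eqn: "card X + card Y = n + 1"
  proof (rule cover1)
    have "0 \<in> f ` (X \<union> Y)" using cnt(2)[OF eqn] by auto
    then obtain A where A: "A \<in> X \<union> Y" "f A = 0" by (metis imageE)
    then have "A \<notin> X" using Xf fX by fastforce
    then obtain a k where a: "A = ((a,0),(k,1))" "A \<in> S" using Yf A by blast
    have "((a,0),(k,1)) \<in> generated n S" using a gen_sub by metis
    from gres[OF this, of 0 1] show "((0,0),(0,1)) \<in> generated n S" by simp
  next
    fix m assume m: "m < n"
    then have "Suc m \<in> f ` (X \<union> Y)" using cnt(2)[OF eqn] by auto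
    then obtain A where A: "A \<in> X \<union> Y" "f A = Suc m" by (metis imageE)
    show "\<exists>a x b. a \<le> m \<and> m < b \<and> b \<le> n \<and> x \<le> 1 \<and> ((a,x),(b,1)) \<in> generated n S"
    proof (cases "A \<in> X")
      case True
      then obtain i j where a: "A = ((i,1),(j,1))" "A \<in> S" using Xf by blast
      have ij: "i < j" "j \<le> n" using arrS[of i 1 j 1] a by auto
      have "((i,1),(j,1)) \<in> generated n S" using a gen_sub by metis
      then show ?thesis using ij a A fX by (intro exI[of _ i] exI[of _ 1] exI[of _ j]) auto
    next
      case False
      then obtain a k where a: "A = ((a,0),(k,1))" "A \<in> S" using Yf A by blast
      have "f A \<noteq> 0" using A by simp
      then obtain c where c: "c \<le> n" "((a,0),(c,1)) \<in> GG ((a,0),(k,1))" using fY a by (auto split: if_splits)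
      then have fa: "f A = Suc (rch n (GG ((a,0),(k,1))) a 0 1)" using fY a by auto
      note df = diag_facts[of a k c, OF _ c]
      have "((a,0),(k,1)) \<in> generated n S" using a gen_sub by metis
      then show ?thesis using df(1,3) a A fa arrS[of a 0 k 1] by (intro exI[of _ a] exI[of _ 0] exI[of _ k]) auto
    qed
  qed
  then show ?thesis using cnt(1) unfolding X_def Y_def by simp
qed

lemma part3:
  "card {A\<in>S. bottom_arrow A} + card {A\<in>S. diagonal_arrow A} \<le> n + 1 \<and>
   (card {A\<in>S. bottom_arrow A} + card {A\<in>S. diagonal_arrow A} = n + 1 \<longrightarrow> ((0,0),(n,0)) \<in> generated n S)"
proof -
  define X where "X = {A\<in>S. bottom_arrow A}"
  define Y where "Y = {A\<in>S. diagonal_arrow A}"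
  define mx where "mx i = (\<exists>i' j'. ((i',0),(j',1)) \<in> S \<and> i < i')" for i
  define f where "f A = (if snd (snd A) = 0 then rch n (GG A) (fst (fst A)) 0 0 else
     if mx (fst (fst A)) then fst (fst A) else n)" for A
  have Xf: "A \<in> X \<Longrightarrow> \<exists>i j. A = ((i,0),(j,0)) \<and> A \<in> S" for A unfolding X_def bottom_arrow_def by auto
  have Yf: "A \<in> Y \<Longrightarrow> \<exists>a k. A = ((a,0),(k,1)) \<and> A \<in> S" for A unfolding Y_def diagonal_arrow_def by auto
  have finX: "finite X" unfolding X_def using finS by auto
  have finY: "finite Y" unfolding Y_def using finS by auto
  have disj: "X \<inter> Y = {}" unfolding X_def Y_def bottom_arrow_def diagonal_arrow_def by auto
  have fX: "f ((a,0),(k,0)) = rch n (GG ((a,0),(k,0))) a 0 0" for a k by (simp add: f_def)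
  have fY: "f ((a,0),(k,1)) = (if mx a then a else n)" for a k by (simp add: f_def)
  have mxn: "mx i \<Longrightarrow> i < n" for i unfolding mx_def using arrS by fastforce
  have mxj: "mx i \<Longrightarrow> ((i,0),(j,1)) \<in> S \<Longrightarrow> i < j" for i j unfolding mx_def using nonmax by blast
  have inj: "inj_on f (X \<union> Y)"
  proof (rule inj_onI, rule ccontr)
    fix A B assume A: "A \<in> X \<union> Y" and B: "B \<in> X \<union> Y" and eq: "f A = f B" and ne: "A \<noteq> B"
    have BD: False if a: "A' = ((a,0),(k,0))" "A' \<in> S" and b: "B' = ((i,0),(j,1))" "B' \<in> S"
      and e: "f A' = f B'" for A' B' a k i j
    proof (cases "mx i")
      case True
      then show False using bd[of a k i j] mxj[OF True] a b e fX fY by auto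
    next
      case False
      then show False using bot_facts(2,4)[of a k] a b e fX fY by auto
    qed
    have DD: False if a: "A' = ((a,0),(k,1))" "A' \<in> S" and b: "B' = ((a',0),(k',1))" "B' \<in> S"
      and e: "f A' = f B'" and ne': "A' \<noteq> B'" for A' B' a k a' k'
    proof -
      have "a = a'"
      proof (cases "mx a")
        case True
        show ?thesis
        proof (cases "mx a'")
          case True then show ?thesis using \<open>mx a\<close> e a b fY by auto
        next
          case False then show ?thesis using \<open>mx a\<close> mxn[of a] e a b fY by auto
        qed
      next
        case False
        show ?thesis
        proof (cases "mx a'")
          case True then show ?thesis using \<open>\<not> mx a\<close> mxn[of a'] e a b fY by auto
        next
          case False then show ?thesis using \<open>\<not> mx a\<close> a b unfolding mx_def by force
        qed
      qed
      then show False using src_unique[of a 0 k 1 k'] a b ne' by auto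
    qed
    show False
    proof (cases "A \<in> X")
      case True
      then obtain a k where a: "A = ((a,0),(k,0))" "A \<in> S" using Xf by blast
      show False
      proof (cases "B \<in> X")
        case True
        then obtain a' k' where b: "B = ((a',0),(k',0))" "B \<in> S" using Xf by blast
        show False
        proof (cases "a \<le> a'")
          case True then show False using bb[of a k a' k'] a b eq ne fX by auto
        next
          case False then show False using bb[of a' k' a k] a b eq ne fX by auto
        qed
      next
        case False
        then obtain i j where b: "B = ((i,0),(j,1))" "B \<in> S" using Yf B by blast
        show False using BD[OF a b eq] .
      qed
    next
      case False
      then obtain i j where a: "A = ((i,0),(j,1))" "A \<in> S" using Yf A by blast
      show False
      proof (cases "B \<in> X")
        case True
        then obtain a' k' where b: "B = ((a',0),(k',0))" "B \<in> S" using Xf by blast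
        show False using BD[OF b a eq[symmetric]] .
      next
        case False
        then obtain i' j' where b: "B = ((i',0),(j',1))" "B \<in> S" using Yf B by blast
        show False using DD[OF a b eq ne] .
      qed
    qed
  qed
  have rng: "f ` (X \<union> Y) \<subseteq> {..<n+1}"
  proof
    fix y assume "y \<in> f ` (X \<union> Y)"
    then obtain A where A: "A \<in> X \<union> Y" "y = f A" by blast
    show "y \<in> {..<n+1}"
    proof (cases "A \<in> X")
      case True
      then obtain a k where a: "A = ((a,0),(k,0))" "A \<in> S" using Xf by blast
      then show ?thesis using bot_facts(2,4)[of a k] A fX by auto
    next
      case False
      then obtain a k where a: "A = ((a,0),(k,1))" "A \<in> S" using Yf A by blast
      then show ?thesis using A fY mxn[of a] by auto
    qed
  qed
  note cnt = count_inj[OF finX finY disj inj rng]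
  have "((0,0),(n,0)) \<in> generated n S" if eqn: "card X + card Y = n + 1"
  proof (rule cover0)
    fix c assume c: "c < n"
    then have "c \<in> f ` (X \<union> Y)" using cnt(2)[OF eqn] by auto
    then obtain A where A: "A \<in> X \<union> Y" "f A = c" by (metis imageE)
    show "\<exists>a b. a \<le> c \<and> c < b \<and> b \<le> n \<and> ((a,0),(b,0)) \<in> generated n S"
    proof (cases "A \<in> X")
      case True
      then obtain a k where a: "A = ((a,0),(k,0))" "A \<in> S" using Xf by blast
      have "((a,0),(k,0)) \<in> generated n S" using a gen_sub by metis
      then show ?thesis using bot_facts(2,3,4)[of a k] a A fX by (intro exI[of _ a] exI[of _ k]) auto
    next
      case False
      then obtain i j where a: "A = ((i,0),(j,1))" "A \<in> S" using Yf A by blast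
      have m: "mx i" using A a fY c by (auto split: if_splits)
      have ij: "i < j" "j \<le> n" using mxj[OF m] a arrS[of i 0 j 1] by auto
      have "((i,0),(j,1)) \<in> generated n S" using a gen_sub by metis
      from gres[OF this, of j 0] ij have "((i,0),(j,0)) \<in> generated n S" by simp
      then show ?thesis using ij a A fY m by (intro exI[of _ i] exI[of _ j]) auto
    qed
  qed
  then show ?thesis using cnt(1) unfolding X_def Y_def by simp
qed

end

theorem lemma6p3:
  fixes p q n :: nat and S T :: "arrow set"
  assumes "prime p" and "prime q" and "p \<noteq> q" and "n \<ge> 1"
    and "transfer_system n T"
    and "minimal_generating_set n S T"
  defines "Tn \<equiv> card {A\<in>S. top_arrow A}"
    and "Bn \<equiv> card {A\<in>S. bottom_arrow A}"
    and "Dn \<equiv> card {A\<in>S. diagonal_arrow A}"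
  shows "(Tn + Bn \<le> n \<and> (Tn + Bn = n \<longrightarrow> ((0, 0), (n, 0)) \<in> generated n S))
       \<and> (Tn + Dn \<le> n + 1 \<and> (Tn + Dn = n + 1 \<longrightarrow> ((0, 0), (n, 1)) \<in> generated n S))
       \<and> (Bn + Dn \<le> n + 1 \<and> (Bn + Dn = n + 1 \<longrightarrow> ((0, 0), (n, 0)) \<in> generated n S))"
proof -
  from assms(6) have arr: "\<And>A. A\<in>S \<Longrightarrow> is_arrow n A \<and> fst A \<noteq> snd A"
    and gS: "generated n S = T" and mn: "\<And>s. s\<in>S \<Longrightarrow> generated n (S - {s}) \<noteq> T"
    unfolding minimal_generating_set_def by auto
  have indep: "s \<notin> generated n (S - {s})" if s: "s \<in> S" for s
  proof
    assume sin: "s \<in> generated n (S - {s})"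
    have "S \<subseteq> generated n (S - {s})"
    proof
      fix x assume "x \<in> S"
      then show "x \<in> generated n (S - {s})" using sin by (cases "x = s") (auto intro: gen_sub)
    qed
    then have "generated n S \<subseteq> generated n (S - {s})" by (rule gen_least)
    moreover have "generated n (S - {s}) \<subseteq> generated n S" by (rule gen_mono) auto
    ultimately show False using mn[OF s] gS by simp
  qed
  interpret M: mgs n S using arr indep by unfold_locales auto
  show ?thesis unfolding Tn_def Bn_def Dn_def using M.part1 M.part2 M.part3 by blast
qed

end
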